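(* Let $n$ be a positive integer and let $a_1,a_2,\ldots,a_n$ be strictly positive real numbers. Let $A_R(n)=[A_R(i,j)]_{i,j=1}^n$ be the matrix with $A_R(i,j)=1$ if $j=1$ and $i\neq 1$; $A_R(i,j)=a_i$ if $i\mid j$; and $A_R(i,j)=0$ otherwise. Then \[ \det(A_R(n))=\left(\prod_{j=1}^n a_j\right)\left[1+\sum_{k=2}^{n}\frac{\mu(k)}{a_k}\right]. \]
   Context: $\mu$ denotes the Möbius function: $\mu(1)=1$, $\mu(j)=0$ if $j$ has a repeated prime factor, and $\mu(j)=(-1)^k$ if $j$ is a product of $k$ distinct primes. *)

theory Defs
  imports "Jordan_Normal_Form.Determinant" "HOL-Computational_Algebra.Squarefree"
begin

definition moebius_mu :: "nat \<Rightarrow> int" where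
  "moebius_mu j = (if squarefree j then (-1) ^ card (prime_factors j) else 0)"

definition A_R_entry :: "(nat \<Rightarrow> real) \<Rightarrow> nat \<Rightarrow> nat \<Rightarrow> real" where
  "A_R_entry a i j = (if j = 1 \<and> i \<noteq> 1 then 1 else if i dvd j then a i else 0)"

text \<open>The n x n matrix A_R(n) (Jordan_Normal_Form matrices are 0-indexed).\<close>
definition A_R :: "(nat \<Rightarrow> real) \<Rightarrow> nat \<Rightarrow> real mat" where
  "A_R a n = mat n n (\<lambda>(i, j). A_R_entry a (i + 1) (j + 1))"

end

theory Submission imports Defs begin

lemma alt_pow_sum:
  assumes "finite P" "P \<noteq> {}"
  shows "(\<Sum>S\<in>Pow P. (-1::int) ^ card S) = 0"
proof (rule sum_alternating_cancels)
  show "finite (Pow P)" using assms by simp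
  have "card {T. T \<subseteq> P \<and> {} \<subseteq> T \<and> even(card T)} = card {T. T \<subseteq> P \<and> {} \<subseteq> T \<and> odd(card T)}"
    using assms by (intro card_subsupersets_even_odd) auto
  thus "card {x. x \<in> Pow P \<and> even (card x)} = card {x. x \<in> Pow P \<and> odd (card x)}" by simp
qed

lemma prime_factors_prod_primes:
  assumes "finite S" "\<And>p. p \<in> S \<Longrightarrow> prime (p::nat)"
  shows "prime_factors (\<Prod>S) = S"
proof -
  have "0 \<notin> id ` S" using assms by (metis id_apply image_iff not_prime_0)
  hence "prime_factors (prod id S) = \<Union>((prime_factors \<circ> id) ` S)"
    using prime_factors_prod[OF assms(1)] by blast
  also have "\<dots> = S" using assms by (auto simp: prime_prime_factors)
  finally show ?thesis by simp
qed

lemma sqf_prod: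
  fixes d :: nat assumes "squarefree d"
  shows "\<Prod>(prime_factors d) = d"
proof -
  have d0: "d \<noteq> 0" using assms by (metis not_squarefree_0)
  have "(\<Prod>p \<in> prime_factors d. p ^ multiplicity p d) = d"
    using prod_prime_factors[OF d0] by simp
  moreover have "\<And>p. p \<in> prime_factors d \<Longrightarrow> multiplicity p d = 1"
    using assms d0 squarefree_factorial_semiring' by blast
  ultimately show ?thesis by (metis (no_types, lifting) power_one_right prod.cong)
qed

lemma mu_sum:
  fixes m :: nat assumes "m \<ge> 2"
  shows "(\<Sum>d\<in>{d. d dvd m}. moebius_mu d) = 0"
proof -
  have m0: "m \<noteq> 0" using assms by auto
  have fin: "finite {d. d dvd m}" using m0 by simp
  let ?Q = "{d. d dvd m \<and> squarefree d}"
  have "(\<Sum>d\<in>{d. d dvd m}. moebius_mu d) = (\<Sum>d\<in>?Q. moebius_mu d)"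
    by (rule sum.mono_neutral_right[OF fin]) (auto simp: moebius_mu_def)
  also have "\<dots> = (\<Sum>d\<in>?Q. (-1) ^ card (prime_factors d))"
    by (rule sum.cong) (auto simp: moebius_mu_def)
  also have "?Q = Prod ` Pow (prime_factors m)"
  proof
    show "?Q \<subseteq> Prod ` Pow (prime_factors m)"
    proof
      fix d assume d: "d \<in> ?Q"
      hence "d = \<Prod>(prime_factors d)" using sqf_prod by auto
      moreover have "prime_factors d \<subseteq> prime_factors m" using d m0 by (intro dvd_prime_factors) auto
      ultimately show "d \<in> Prod ` Pow (prime_factors m)" by blast
    qed
  next
    show "Prod ` Pow (prime_factors m) \<subseteq> ?Q"
    proof
      fix d assume "d \<in> Prod ` Pow (prime_factors m)"
      then obtain S where S: "S \<subseteq> prime_factors m" "d = \<Prod>S" by auto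
      have fS: "finite S" using S finite_subset by blast
      have pr: "\<And>p. p \<in> S \<Longrightarrow> prime p" using S by auto
      have "squarefree d" unfolding S(2)
        by (rule squarefree_prod_coprime) (auto simp: pr squarefree_prime primes_coprime)
      moreover have "d dvd m"
      proof -
        have "\<Prod>S dvd \<Prod>(prime_factors m)" using S by (intro prod_dvd_prod_subset) auto
        also have "\<Prod>(prime_factors m) dvd (\<Prod>p \<in> prime_factors m. p ^ multiplicity p m)"
          by (intro prod_dvd_prod) (auto simp: prime_factors_multiplicity dvd_power)
        also have "\<dots> = m" using prod_prime_factors[OF m0] by simp
        finally show ?thesis using S by simp
      qed
      ultimately show "d \<in> ?Q" by simp
    qed
  qed
  also have "(\<Sum>d\<in>Prod ` Pow (prime_factors m). (-1::int) ^ card (prime_factors d))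
      = (\<Sum>S\<in>Pow (prime_factors m). (-1) ^ card (prime_factors (\<Prod>S)))"
  proof (rule sum.reindex_cong[where l=Prod])
    show "inj_on Prod (Pow (prime_factors m))"
      by (rule inj_on_inverseI[where g=prime_factors])
         (auto intro!: prime_factors_prod_primes dest: finite_subset)
  qed auto
  also have "\<dots> = (\<Sum>S\<in>Pow (prime_factors m). (-1) ^ card S)"
  proof (rule sum.cong)
    fix S assume "S \<in> Pow (prime_factors m)"
    hence "prime_factors (\<Prod>S) = S"
      by (intro prime_factors_prod_primes) (auto dest: finite_subset)
    thus "(-1::int) ^ card (prime_factors (\<Prod>S)) = (-1) ^ card S" by simp
  qed simp
  also have "\<dots> = 0"
  proof (rule alt_pow_sum)
    show "finite (prime_factors m)" by simp
    obtain p where "prime p" "p dvd m" using assms prime_factor_nat[of m] by auto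
    thus "prime_factors m \<noteq> {}" using m0 by (auto simp: prime_factors_dvd)
  qed
  finally show ?thesis .
qed

lemma sum_shift2: "(\<Sum>k = 2..Suc m. g k) = (\<Sum>i<m. g (i+2::nat))"
  by (induction m) (auto simp: sum.cl_ivl_Suc)

lemma prod_shift2: "(\<Prod>k = 2..Suc m. g k) = (\<Prod>i<m. g (i+2::nat))"
  by (induction m) (auto simp: prod.cl_ivl_Suc)

lemma mu_one [simp]: "moebius_mu 1 = 1" "moebius_mu (Suc 0) = 1" by (simp_all add: moebius_mu_def)

lemma mu_sum_real:
  fixes m :: nat assumes "m \<ge> 2"
  shows "(\<Sum>d\<in>{d. d dvd m}. real_of_int (moebius_mu d)) = 0"
  using mu_sum[OF assms] by (metis of_int_0 of_int_sum)

theorem theorem6: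
  fixes n :: nat and a :: "nat \<Rightarrow> real"
  assumes "n \<ge> 1"
    and "\<And>i. 1 \<le> i \<Longrightarrow> i \<le> n \<Longrightarrow> a i > 0"
  shows "det (A_R a n) =
    (\<Prod>j = 1..n. a j) * (1 + (\<Sum>k = 2..n. of_int (moebius_mu k) / a k))"
proof -
  have apos: "a (Suc k) \<noteq> 0" if "k < n" for k using assms(2)[of "Suc k"] that by simp
  have a1: "a 1 \<noteq> 0" "a (Suc 0) \<noteq> 0" using apos[of 0] assms(1) by simp_all
  define A where "A = A_R a n"
  define L where "L = mat n n (\<lambda>(i,j). if i = 0 then a 1 * of_int (moebius_mu (j+1)) / a (j+1) else if i = j then 1 else (0::real))"
  define B where "B = L * A"
  have A: "A \<in> carrier_mat n n" unfolding A_def A_R_def by simp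
  have Lc: "L \<in> carrier_mat n n" unfolding L_def by simp
  have Bc: "B \<in> carrier_mat n n" unfolding B_def using A Lc by simp
  have detL: "det L = 1"
  proof -
    have "det L = prod_list (diag_mat L)"
      by (rule det_upper_triangular[OF _ Lc]) (auto simp: L_def upper_triangular_def)
    also have "\<dots> = (\<Prod>i = 0..<n. L $$ (i,i))" using Lc by (simp add: prod_list_diag_prod)
    also have "\<dots> = 1" by (rule prod.neutral) (auto simp: L_def a1)
    finally show ?thesis .
  qed
  have detB: "det B = det A" unfolding B_def using det_mult[OF Lc A] detL by simp
  have Bent: "B $$ (i,j) = A $$ (i,j)" if "0 < i" "i < n" "j < n" for i j
  proof -
    have "B $$ (i,j) = (\<Sum>k<n. L $$ (i,k) * A $$ (k,j))"
      using that A Lc by (simp add: B_def scalar_prod_def lessThan_atLeast0)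
    also have "\<dots> = (\<Sum>k<n. if k = i then A $$ (k,j) else 0)"
      by (rule sum.cong) (use that in \<open>auto simp: L_def\<close>)
    also have "\<dots> = A $$ (i,j)" using that by simp
    finally show ?thesis .
  qed
  have B0: "B $$ (0,j) = (\<Sum>k<n. a 1 * of_int (moebius_mu (k+1)) / a (k+1) * A_R_entry a (k+1) (j+1))" if "j < n" for j
    using that A Lc assms(1) by (simp add: B_def scalar_prod_def lessThan_atLeast0 L_def A_def A_R_def)
  have B0j: "B $$ (0,j) = 0" if "0 < j" "j < n" for j
  proof -
    have "B $$ (0,j) = (\<Sum>k<n. a 1 * (if Suc k dvd Suc j then of_int (moebius_mu (Suc k)) else 0))"
      unfolding B0[OF that(2)]
      by (rule sum.cong) (use that apos in \<open>auto simp: A_R_entry_def\<close>)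
    also have "\<dots> = a 1 * (\<Sum>k<n. (if Suc k dvd Suc j then of_int (moebius_mu (Suc k)) else 0))"
      by (simp add: sum_distrib_left)
    also have "(\<Sum>k<n. (if Suc k dvd Suc j then real_of_int (moebius_mu (Suc k)) else 0)) = (\<Sum>d\<in>{d. d dvd Suc j}. real_of_int (moebius_mu d))"
    proof -
    have "(\<Sum>k<n. (if Suc k dvd Suc j then real_of_int (moebius_mu (Suc k)) else 0)) = (\<Sum>d\<in>Suc ` {..<n}. (if d dvd Suc j then real_of_int (moebius_mu d) else 0))"
      by (simp add: sum.reindex)
    also have "\<dots> = (\<Sum>d\<in>{d \<in> Suc ` {..<n}. d dvd Suc j}. real_of_int (moebius_mu d))"
      by (simp add: sum.inter_filter)
    also have "{d \<in> Suc ` {..<n}. d dvd Suc j} = {d. d dvd Suc j}"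
    proof safe
      fix d assume d: "d dvd Suc j"
      hence "d \<le> Suc j" "d \<noteq> 0" using dvd_imp_le by (auto intro: Nat.gr0I)
      hence "d - 1 < n" "d = Suc (d - 1)" using that by auto
      thus "d \<in> Suc ` {..<n}" by blast
    qed
    finally show ?thesis .
    qed
    also have "\<dots> = 0" using mu_sum_real[of "Suc j"] that by simp
    finally show ?thesis by simp
  qed
  obtain m where nm: "n = Suc m" using assms(1) by (cases n) auto
  have B00: "B $$ (0,0) = a 1 * (1 + (\<Sum>k = 2..n. of_int (moebius_mu k) / a k))"
  proof -
    have "B $$ (0,0) = (\<Sum>k<Suc m. a 1 * of_int (moebius_mu (k+1)) / a (k+1) * A_R_entry a (k+1) 1)"
      using B0[of 0] nm by simp
    also have "\<dots> = a 1 + (\<Sum>i<m. a 1 * of_int (moebius_mu (i+2)) / a (i+2))"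
      by (subst sum.lessThan_Suc_shift) (simp add: A_R_entry_def a1)
    also have "\<dots> = a 1 * (1 + (\<Sum>i<m. of_int (moebius_mu (i+2)) / a (i+2)))"
      by (simp add: algebra_simps sum_distrib_left)
    finally show ?thesis unfolding nm sum_shift2 .
  qed
  have "det B = (\<Sum>j<n. B $$ (0,j) * cofactor B 0 j)"
    using laplace_expansion_row[OF Bc] assms(1) by simp
  also have "\<dots> = (\<Sum>j<n. if j = 0 then B $$ (0,0) * cofactor B 0 0 else 0)"
    by (rule sum.cong) (auto simp: B0j)
  also have "\<dots> = B $$ (0,0) * det (mat_delete B 0 0)"
    using assms(1) by (simp add: cofactor_def)
  also have "det (mat_delete B 0 0) = (\<Prod>j = 2..n. a j)"
  proof -
    have MD: "mat_delete B 0 0 = mat m m (\<lambda>(i,j). A_R_entry a (i+2) (j+2))"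
      by (rule eq_matI) (use Bc nm in \<open>auto simp: mat_delete_def Bent A_def A_R_def\<close>)
    have "det (mat_delete B 0 0) = prod_list (diag_mat (mat_delete B 0 0))"
      unfolding MD
    proof (rule det_upper_triangular[of _ m])
      show "upper_triangular (mat m m (\<lambda>(i,j). A_R_entry a (i+2) (j+2)))"
      proof (rule upper_triangularI)
        fix i j assume ij: "j < i" "i < dim_row (mat m m (\<lambda>(i,j). A_R_entry a (i+2) (j+2)))"
        have "\<not> (i+2) dvd (j+2)" using ij(1) by (auto dest: dvd_imp_le)
        thus "mat m m (\<lambda>(i,j). A_R_entry a (i+2) (j+2)) $$ (i,j) = 0" using ij by (simp add: A_R_entry_def)
      qed
    qed simp
    also have "\<dots> = (\<Prod>i = 0..<m. a (i+2))"
      unfolding MD prod_list_diag_prod by (simp add: A_R_entry_def)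
    finally show ?thesis unfolding nm prod_shift2 by (simp add: lessThan_atLeast0)
  qed
  finally show ?thesis
    unfolding A_def[symmetric] detB[symmetric] B00 using nm by (simp add: prod.atLeast_Suc_atMost numeral_2_eq_2)
qed
end
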